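(* Let $P$ be a finite set of points in the plane in general position with $|P|$ even, and let $C$ be a connected component of the underlying graph of $P$ with vertex set $V(C)\subseteq P$. Then $|V(C)|$ is even and the underlying graph of the point set $V(C)$ is exactly $C$.
   Context: Points are in general position if no three are collinear. For a finite set $P$ of $n$ points in general position with $n$ even, a halving line of $P$ is a line through two points of $P$ that has exactly $(n-2)/2$ points of $P$ strictly on each side. The underlying graph of $P$ has vertex set $P$, and two points are adjacent if and only if the line through them is a halving line of $P$. *)

theory Defs
  imports Complex_Main
begin

text \<open>Points of the plane are pairs of reals.  orient a b c is twice the signed area
  of the triangle abc; it is positive iff c lies strictly to the left of the directed
  line from a to b, negative iff strictly to the right, zero iff a b c are collinear.\<close>

definition orient :: "real \<times> real \<Rightarrow> real \<times> real \<Rightarrow> real \<times> real \<Rightarrow> real" where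
  "orient a b c = (fst b - fst a) * (snd c - snd a) - (snd b - snd a) * (fst c - fst a)"

definition general_position :: "(real \<times> real) set \<Rightarrow> bool" where
  "general_position P \<longleftrightarrow>
     (\<forall>a\<in>P. \<forall>b\<in>P. \<forall>c\<in>P. a \<noteq> b \<and> a \<noteq> c \<and> b \<noteq> c \<longrightarrow> orient a b c \<noteq> 0)"

definition halving_line :: "(real \<times> real) set \<Rightarrow> real \<times> real \<Rightarrow> real \<times> real \<Rightarrow> bool" where
  "halving_line P a b \<longleftrightarrow> a \<in> P \<and> b \<in> P \<and> a \<noteq> b \<and>
     2 * card {c \<in> P. orient a b c > 0} + 2 = card P \<and>
     2 * card {c \<in> P. orient a b c < 0} + 2 = card P"

abbreviation underlying_adj :: "(real \<times> real) set \<Rightarrow> real \<times> real \<Rightarrow> real \<times> real \<Rightarrow> bool" where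
  "underlying_adj P \<equiv> halving_line P"

definition component_vertices :: "(real \<times> real) set \<Rightarrow> real \<times> real \<Rightarrow> (real \<times> real) set" where
  "component_vertices P p = {q. (underlying_adj P)\<^sup>*\<^sup>* p q}"

end

theory Submission
  imports Defs
begin
definition pr :: "real \<Rightarrow> real \<times> real \<Rightarrow> real" where
  "pr t x = cos t * fst x + sin t * snd x"
lemma tie_orient:
  assumes "pr t x = pr t y"
  shows "orient x y c = ((fst y - fst x) * sin t - (snd y - snd x) * cos t) * (pr t c - pr t x)"
proof -
  have s: "sin t ^ 2 + cos t ^ 2 = 1" by simp
  from assms have e: "cos t * (fst y - fst x) + sin t * (snd y - snd x) = 0" unfolding pr_def by algebra
  show ?thesis unfolding orient_def pr_def using s e by algebra
qed
lemma tie_k_nz: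
  assumes "pr t x = pr t y" "x \<noteq> y"
  shows "(fst y - fst x) * sin t - (snd y - snd x) * cos t \<noteq> 0"
proof
  assume k: "(fst y - fst x) * sin t - (snd y - snd x) * cos t = 0"
  have s: "sin t ^ 2 + cos t ^ 2 = 1" by simp
  have e: "cos t * (fst y - fst x) + sin t * (snd y - snd x) = 0" using assms(1) unfolding pr_def by algebra
  have "fst y - fst x = 0" using k e s by algebra
  moreover have "snd y - snd x = 0" using k e s by algebra
  ultimately show False using assms(2) by (simp add: prod_eq_iff)
qed
lemma tie_unique:
  assumes "general_position Q" "x \<in> Q" "y \<in> Q" "z \<in> Q" "x \<noteq> y" "pr t x = pr t y" "pr t z = pr t x"
  shows "z = x \<or> z = y"
proof (rule ccontr)
  assume "\<not> (z = x \<or> z = y)"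
  then have "orient x y z \<noteq> 0"
    using assms(1)[unfolded general_position_def, rule_format, OF assms(2) assms(3) assms(4)] assms(5) by blast
  moreover have "orient x y z = 0" using tie_orient[OF assms(6), of z] assms(7) by simp
  ultimately show False by simp
qed
lemma halving_tie:
  assumes "finite Q" "general_position Q" "a \<in> Q" "b \<in> Q" "a \<noteq> b" "pr t a = pr t b"
  shows "halving_line Q a b \<longleftrightarrow> 2 * card {c\<in>Q. pr t c < pr t a} + 2 = card Q"
proof -
  define k where "k = (fst b - fst a) * sin t - (snd b - snd a) * cos t"
  have k0: "k \<noteq> 0" using tie_k_nz[OF assms(6,5)] k_def by simp
  have o: "\<And>c. orient a b c = k * (pr t c - pr t a)" using tie_orient[OF assms(6)] k_def by simp
  define B where "B = {c\<in>Q. pr t c < pr t a}"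
  define A where "A = {c\<in>Q. pr t c > pr t a}"
  have Qeq: "Q = B \<union> A \<union> {a,b}"
  proof
    show "Q \<subseteq> B \<union> A \<union> {a,b}"
    proof
      fix z assume z: "z \<in> Q"
      consider "pr t z < pr t a" | "pr t z > pr t a" | "pr t z = pr t a" by linarith
      then show "z \<in> B \<union> A \<union> {a,b}"
        using z tie_unique[OF assms(2,3,4) z assms(5,6)] unfolding A_def B_def by cases auto
    qed
  qed (use assms in \<open>auto simp: A_def B_def\<close>)
  have fA: "finite A" "finite B" using assms(1) A_def B_def by auto
  have cQ: "card Q = card B + card A + 2"
  proof -
    have "card Q = card (B \<union> A) + card {a,b}"
      by (subst Qeq, rule card_Un_disjoint) (use fA assms in \<open>auto simp: A_def B_def\<close>)
    also have "card (B \<union> A) = card B + card A"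
      by (rule card_Un_disjoint) (use fA in \<open>auto simp: A_def B_def\<close>)
    finally show ?thesis using assms(5) by simp
  qed
  have sets: "({c\<in>Q. orient a b c > 0} = A \<and> {c\<in>Q. orient a b c < 0} = B) \<or>
              ({c\<in>Q. orient a b c > 0} = B \<and> {c\<in>Q. orient a b c < 0} = A)"
  proof (cases "k > 0")
    case True
    then show ?thesis unfolding o A_def B_def by (auto simp: zero_less_mult_iff mult_less_0_iff)
  next
    case False
    then have "k < 0" using k0 by simp
    then show ?thesis unfolding o A_def B_def by (auto simp: zero_less_mult_iff mult_less_0_iff)
  qed
  show ?thesis unfolding halving_line_def B_def[symmetric] using sets cQ assms by auto
qed
definition clt :: "(real \<times> real) set \<Rightarrow> real \<Rightarrow> real \<times> real \<Rightarrow> nat" where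
  "clt P t x = card {q\<in>P. pr t q < pr t x}"
definition cle :: "(real \<times> real) set \<Rightarrow> real \<Rightarrow> real \<times> real \<Rightarrow> nat" where
  "cle P t x = card {q\<in>P. pr t q \<le> pr t x}"
definition w :: "(real \<times> real) set \<Rightarrow> real \<Rightarrow> real \<times> real \<Rightarrow> int" where
  "w P t x = (if 2 * cle P t x \<le> card P then 1 else 0) + (if 2 * clt P t x < card P then 1 else 0)"

locale hl =
  fixes P :: "(real \<times> real) set"
  assumes fin: "finite P" and gp: "general_position P" and ev: "even (card P)"
begin

lemma le_split: "cle P t x = clt P t x + card {q\<in>P. pr t q = pr t x}"
proof -
  have "{q\<in>P. pr t q \<le> pr t x} = {q\<in>P. pr t q < pr t x} \<union> {q\<in>P. pr t q = pr t x}" by auto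
  then show ?thesis unfolding cle_def clt_def
    by (simp add: card_Un_disjoint fin) (subst card_Un_disjoint, use fin in auto)
qed

lemma eqclass:
  assumes "x \<in> P"
  shows "{q\<in>P. pr t q = pr t x} = {x} \<or> (\<exists>y\<in>P. y \<noteq> x \<and> {q\<in>P. pr t q = pr t x} = {x,y})"
proof (cases "\<exists>y\<in>P. y \<noteq> x \<and> pr t y = pr t x")
  case True
  then obtain y where y: "y \<in> P" "y \<noteq> x" "pr t y = pr t x" by blast
  have "{q\<in>P. pr t q = pr t x} = {x,y}"
    using tie_unique[OF gp assms y(1) _ y(2)[symmetric] y(3)[symmetric]] y assms by auto
  then show ?thesis using y by blast
next
  case False
  then show ?thesis using assms by auto
qed

lemma clt_le_card: "clt P t x \<le> card P" "cle P t x \<le> card P"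
  unfolding clt_def cle_def by (auto intro: card_mono fin)

lemma antipodal:
  assumes "x \<in> P"
  shows "w P (t + pi) x = 2 - w P t x"
proof -
  have prn: "\<And>q. pr (t + pi) q = - pr t q" unfolding pr_def by (simp add: cos_periodic_pi sin_periodic_pi)
  have 1: "clt P (t + pi) x = card P - cle P t x"
  proof -
    have "{q\<in>P. pr (t+pi) q < pr (t+pi) x} = P - {q\<in>P. pr t q \<le> pr t x}" using prn by auto
    then show ?thesis unfolding clt_def cle_def by (simp add: card_Diff_subset fin)
  qed
  have 2: "cle P (t + pi) x = card P - clt P t x"
  proof -
    have "{q\<in>P. pr (t+pi) q \<le> pr (t+pi) x} = P - {q\<in>P. pr t q < pr t x}" using prn by auto
    then show ?thesis unfolding clt_def cle_def by (simp add: card_Diff_subset fin)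
  qed
  have "clt P t x \<le> cle P t x" using le_split by simp
  then show ?thesis unfolding w_def 1 2 using clt_le_card[of t x] by auto
qed

definition Pres :: "real \<Rightarrow> real \<Rightarrow> bool" where
  "Pres t s \<longleftrightarrow> (\<forall>p\<in>P. \<forall>q\<in>P. pr t p < pr t q \<longrightarrow> pr s p < pr s q)"

lemma pert:
  assumes "Pres t s" "x \<in> P"
  shows "clt P s x = clt P t x + card {q\<in>P. pr t q = pr t x \<and> pr s q < pr s x}"
    and "cle P s x = clt P t x + card {q\<in>P. pr t q = pr t x \<and> pr s q \<le> pr s x}"
proof -
  have a: "\<And>q. q \<in> P \<Longrightarrow> pr t q < pr t x \<Longrightarrow> pr s q < pr s x"
   and b: "\<And>q. q \<in> P \<Longrightarrow> pr t x < pr t q \<Longrightarrow> pr s x < pr s q"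
    using assms unfolding Pres_def by auto
  have i1: "pr s q < pr s x \<longleftrightarrow> pr t q < pr t x \<or> (pr t q = pr t x \<and> pr s q < pr s x)"
    and i2: "pr s q \<le> pr s x \<longleftrightarrow> pr t q < pr t x \<or> (pr t q = pr t x \<and> pr s q \<le> pr s x)"
    if q: "q \<in> P" for q
  proof -
    have "(pr s q < pr s x \<longleftrightarrow> pr t q < pr t x \<or> (pr t q = pr t x \<and> pr s q < pr s x)) \<and>
          (pr s q \<le> pr s x \<longleftrightarrow> pr t q < pr t x \<or> (pr t q = pr t x \<and> pr s q \<le> pr s x))"
    proof (cases rule: linorder_cases[of "pr t q" "pr t x"])
      case less
      then show ?thesis using a[OF q less] by simp
    next
      case equal
      then show ?thesis by simp
    next
      case greater
      then show ?thesis using b[OF q greater] by simp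
    qed
    then show "pr s q < pr s x \<longleftrightarrow> pr t q < pr t x \<or> (pr t q = pr t x \<and> pr s q < pr s x)"
      and "pr s q \<le> pr s x \<longleftrightarrow> pr t q < pr t x \<or> (pr t q = pr t x \<and> pr s q \<le> pr s x)" by blast+
  qed
  have fs: "finite {q\<in>P. pr t q < pr t x}" "finite {q\<in>P. pr t q = pr t x \<and> pr s q < pr s x}"
    "finite {q\<in>P. pr t q = pr t x \<and> pr s q \<le> pr s x}" using fin by auto
  have "{q\<in>P. pr s q < pr s x} = {q\<in>P. pr t q < pr t x} \<union> {q\<in>P. pr t q = pr t x \<and> pr s q < pr s x}"
    using i1 by blast
  moreover have "{q\<in>P. pr t q < pr t x} \<inter> {q\<in>P. pr t q = pr t x \<and> pr s q < pr s x} = {}" by auto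
  ultimately show "clt P s x = clt P t x + card {q\<in>P. pr t q = pr t x \<and> pr s q < pr s x}"
    unfolding clt_def using card_Un_disjoint[OF fs(1,2)] by simp
  have "{q\<in>P. pr s q \<le> pr s x} = {q\<in>P. pr t q < pr t x} \<union> {q\<in>P. pr t q = pr t x \<and> pr s q \<le> pr s x}"
    using i2 by blast
  moreover have "{q\<in>P. pr t q < pr t x} \<inter> {q\<in>P. pr t q = pr t x \<and> pr s q \<le> pr s x} = {}" by auto
  ultimately show "cle P s x = clt P t x + card {q\<in>P. pr t q = pr t x \<and> pr s q \<le> pr s x}"
    unfolding cle_def clt_def using card_Un_disjoint[OF fs(1,3)] by simp
qed

lemma pair_counts:
  assumes "Pres t s" "z \<in> P" "v \<in> P" "v \<noteq> z" "pr t v = pr t z"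
  shows "clt P s z = clt P t z + (if pr s v < pr s z then 1 else 0)"
    and "cle P s z = clt P t z + 1 + (if pr s v \<le> pr s z then 1 else 0)"
    and "cle P t z = clt P t z + 2"
proof -
  have E: "{q\<in>P. pr t q = pr t z} = {z,v}"
    using tie_unique[OF gp assms(2,3) _ assms(4)[symmetric] assms(5)[symmetric]] assms by auto
  have "{q\<in>P. pr t q = pr t z \<and> pr s q < pr s z} = (if pr s v < pr s z then {v} else {})"
    using E assms by auto
  then show "clt P s z = clt P t z + (if pr s v < pr s z then 1 else 0)"
    using pert(1)[OF assms(1,2)] by simp
  have "{q\<in>P. pr t q = pr t z \<and> pr s q \<le> pr s z} = (if pr s v \<le> pr s z then {z,v} else {z})"
    using E assms by auto
  then show "cle P s z = clt P t z + 1 + (if pr s v \<le> pr s z then 1 else 0)"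
    using pert(2)[OF assms(1,2)] assms(4) by simp
  show "cle P t z = clt P t z + 2" using le_split[of t z] E assms(4) by simp
qed

lemma bad:
  assumes "Pres t s" "x \<in> P" "w P s x \<noteq> w P t x"
  shows "\<exists>y\<in>P. y \<noteq> x \<and> pr t y = pr t x \<and> 2 * clt P t x + 2 = card P"
proof -
  consider "{q\<in>P. pr t q = pr t x} = {x}" | "\<exists>y\<in>P. y \<noteq> x \<and> {q\<in>P. pr t q = pr t x} = {x,y}"
    using eqclass[OF assms(2)] by blast
  then show ?thesis
  proof cases
    case 1
    have a: "{q\<in>P. pr t q = pr t x \<and> pr s q < pr s x} = {}" using 1 by auto
    have b: "{q\<in>P. pr t q = pr t x \<and> pr s q \<le> pr s x} = {x}" using 1 by auto
    have "w P s x = w P t x" unfolding w_def pert[OF assms(1,2)] a b le_split[of t x] 1 by simp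
    then show ?thesis using assms(3) by simp
  next
    case 2
    then obtain y where y: "y \<in> P" "y \<noteq> x" "pr t y = pr t x" by blast
    note pc = pair_counts[OF assms(1,2) y]
    have "2 * clt P t x + 2 = card P"
    proof (rule ccontr)
      assume ne: "2 * clt P t x + 2 \<noteq> card P"
      have "2 * clt P t x + 4 \<le> card P \<or> card P \<le> 2 * clt P t x" using ne ev by presburger
      then have "w P s x = w P t x" unfolding w_def pc by auto
      then show False using assms(3) by simp
    qed
    then show ?thesis using y by blast
  qed
qed

lemma pair:
  assumes "Pres t s" "x \<in> P" "y \<in> P" "y \<noteq> x" "pr t y = pr t x" "2 * clt P t x + 2 = card P"
  shows "w P s x + w P s y = w P t x + w P t y"
proof -
  have cy: "clt P t y = clt P t x" unfolding clt_def using assms(5) by simp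
  note px = pair_counts[OF assms(1,2,3,4,5)]
  note py = pair_counts[OF assms(1,3,2) assms(4)[symmetric] assms(5)[symmetric]]
  show ?thesis unfolding w_def px py cy using assms(6) by auto
qed

lemma sum_two:
  assumes "finite C" "x \<in> C" "y \<in> C" "x \<noteq> y"
  shows "sum f C = f x + f y + sum f (C - {x,y})"
proof -
  have "sum f C = f x + sum f (C - {x})" using assms by (simp add: sum.remove)
  also have "sum f (C - {x}) = f y + sum f (C - {x} - {y})" using assms by (simp add: sum.remove)
  finally show ?thesis by (simp add: Diff_insert2[symmetric] add.assoc)
qed

lemma g_local:
  assumes "C \<subseteq> P" "\<And>x y. x \<in> C \<Longrightarrow> halving_line P x y \<Longrightarrow> y \<in> C" "Pres t s"
  shows "(\<Sum>x\<in>C. w P s x) = (\<Sum>x\<in>C. w P t x)"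
proof (cases "\<forall>x\<in>C. w P s x = w P t x")
  case True
  then show ?thesis by (intro sum.cong) auto
next
  case False
  then obtain x where x: "x \<in> C" "w P s x \<noteq> w P t x" by blast
  have xP: "x \<in> P" using x assms(1) by blast
  obtain y where y: "y \<in> P" "y \<noteq> x" "pr t y = pr t x" and c: "2 * clt P t x + 2 = card P"
    using bad[OF assms(3) xP x(2)] by blast
  have "halving_line P x y"
    using halving_tie[OF fin gp xP y(1) y(2)[symmetric] y(3)[symmetric]] c unfolding clt_def by simp
  then have yC: "y \<in> C" using assms(2) x by blast
  have finC: "finite C" using assms(1) fin finite_subset by blast
  have rest: "w P s z = w P t z" if z: "z \<in> C - {x,y}" for z
  proof (rule ccontr)
    assume "w P s z \<noteq> w P t z"
    moreover have zP: "z \<in> P" using z assms(1) by blast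
    ultimately obtain z' where z': "z' \<in> P" "z' \<noteq> z" "pr t z' = pr t z" and cz: "2 * clt P t z + 2 = card P"
      using bad[OF assms(3)] by blast
    have ctz: "cle P t z = clt P t z + 2" using pair_counts(3)[OF assms(3) zP z'] .
    have ctx: "cle P t x = clt P t x + 2" using pair_counts(3)[OF assms(3) xP y] .
    consider "pr t z < pr t x" | "pr t z > pr t x" | "pr t z = pr t x" by linarith
    then show False
    proof cases
      case 1
      have "{q\<in>P. pr t q \<le> pr t z} \<subseteq> {q\<in>P. pr t q < pr t x}" using 1 by auto
      then have "cle P t z \<le> clt P t x" unfolding cle_def clt_def by (intro card_mono) (use fin in auto)
      then show False using ctz cz c by simp
    next
      case 2
      have "{q\<in>P. pr t q \<le> pr t x} \<subseteq> {q\<in>P. pr t q < pr t z}" using 2 by auto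
      then have "cle P t x \<le> clt P t z" unfolding cle_def clt_def by (intro card_mono) (use fin in auto)
      then show False using ctx cz c by simp
    next
      case 3
      then show False using tie_unique[OF gp xP y(1) zP y(2)[symmetric] y(3)[symmetric]] z by auto
    qed
  qed
  have "(\<Sum>x\<in>C. w P s x) = w P s x + w P s y + (\<Sum>z\<in>C - {x,y}. w P s z)"
    using sum_two[OF finC x(1) yC y(2)[symmetric]] .
  also have "\<dots> = w P t x + w P t y + (\<Sum>z\<in>C - {x,y}. w P t z)"
  proof -
    have "(\<Sum>z\<in>C - {x,y}. w P s z) = (\<Sum>z\<in>C - {x,y}. w P t z)"
      by (rule sum.cong[OF refl]) (rule rest)
    then show ?thesis using pair[OF assms(3) xP y c] by simp
  qed
  also have "\<dots> = (\<Sum>x\<in>C. w P t x)"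
    by (rule sum_two[OF finC x(1) yC y(2)[symmetric], symmetric])
  finally show ?thesis .
qed

lemma ev_pres: "eventually (\<lambda>s. Pres t s) (nhds t)"
proof -
  have "\<forall>p\<in>P. \<forall>q\<in>P. eventually (\<lambda>s. pr t p < pr t q \<longrightarrow> pr s p < pr s q) (nhds t)"
  proof (intro ballI)
    fix p q
    show "eventually (\<lambda>s. pr t p < pr t q \<longrightarrow> pr s p < pr s q) (nhds t)"
    proof (cases "pr t p < pr t q")
      case True
      have "((\<lambda>s. pr s q - pr s p) \<longlongrightarrow> pr t q - pr t p) (nhds t)"
        unfolding pr_def by (intro tendsto_intros filterlim_ident)
      from order_tendstoD(1)[OF this, of 0] True
      have "eventually (\<lambda>s. 0 < pr s q - pr s p) (nhds t)" by simp
      then show ?thesis by (rule eventually_mono) simp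
    qed simp
  qed
  then show ?thesis unfolding Pres_def
    by (intro eventually_ball_finite fin ballI) (simp add: eventually_ball_finite fin)
qed

lemma g_const:
  assumes "C \<subseteq> P" "\<And>x y. x \<in> C \<Longrightarrow> halving_line P x y \<Longrightarrow> y \<in> C"
  shows "(\<Sum>x\<in>C. w P t x) = int (card C)"
proof -
  define f where "f s = real_of_int (\<Sum>x\<in>C. w P s x)" for s
  have D: "(f has_real_derivative 0) (at x)" for x
  proof -
    have "eventually (\<lambda>s. f s = f x) (nhds x)"
      using ev_pres[of x] by (rule eventually_mono) (simp add: f_def g_local[OF assms])
    then have "(f has_real_derivative 0) (at x) \<longleftrightarrow> ((\<lambda>_. f x) has_real_derivative 0) (at x)"
      by (intro DERIV_cong_ev) auto
    then show ?thesis by simp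
  qed
  have "f (t + pi) = f t" by (rule DERIV_isconst_all) (rule allI, rule D)
  then have e1: "(\<Sum>x\<in>C. w P (t+pi) x) = (\<Sum>x\<in>C. w P t x)" by (simp only: f_def of_int_eq_iff)
  have e2: "(\<Sum>x\<in>C. w P (t+pi) x) = (\<Sum>x\<in>C. 2 - w P t x)"
  proof (rule sum.cong[OF refl])
    fix x assume "x \<in> C"
    then have "x \<in> P" using assms(1) by blast
    then show "w P (t+pi) x = 2 - w P t x" by (rule antipodal)
  qed
  have e3: "(\<Sum>x\<in>C. 2 - w P t x) = 2 * int (card C) - (\<Sum>x\<in>C. w P t x)"
    by (simp add: sum_subtractf)
  show ?thesis using e1 e2 e3 by linarith
qed

lemma Pres_refl: "Pres t t" unfolding Pres_def by simp

lemma w_le2: "w P t x \<le> 2" "w P t x \<ge> 0" unfolding w_def by auto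

lemma tie_main:
  assumes "C \<subseteq> P" "\<And>x y. x \<in> C \<Longrightarrow> halving_line P x y \<Longrightarrow> y \<in> C"
    and "a \<in> C" "b \<in> C" "a \<noteq> b" "pr t a = pr t b"
  shows "2 * clt P t a + 2 = card P \<longleftrightarrow> 2 * card {c\<in>C. pr t c < pr t a} + 2 = card C"
proof -
  have aP: "a \<in> P" and bP: "b \<in> P" using assms by auto
  have finC: "finite C" using assms(1) fin finite_subset by blast
  define c0 where "c0 = clt P t a"
  define B where "B = {c\<in>C. pr t c < pr t a}"
  define A where "A = {c\<in>C. pr t c > pr t a}"
  have cla: "cle P t a = c0 + 2" using pair_counts(3)[OF Pres_refl aP bP assms(5)[symmetric] assms(6)[symmetric]] c0_def by simp
  have clb: "clt P t b = c0" "cle P t b = c0 + 2"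
    using cla unfolding c0_def clt_def cle_def assms(6) by auto
  have Bb: "cle P t x \<le> c0" if "x \<in> B" for x
  proof -
    have "{q\<in>P. pr t q \<le> pr t x} \<subseteq> {q\<in>P. pr t q < pr t a}" using that B_def by auto
    then show ?thesis unfolding cle_def c0_def clt_def by (intro card_mono) (use fin in auto)
  qed
  have Ab: "clt P t x \<ge> c0 + 2" if "x \<in> A" for x
  proof -
    have "{q\<in>P. pr t q \<le> pr t a} \<subseteq> {q\<in>P. pr t q < pr t x}" using that A_def by auto
    then have "cle P t a \<le> clt P t x" unfolding cle_def clt_def by (intro card_mono) (use fin in auto)
    then show ?thesis using cla by simp
  qed
  have cltle: "clt P t x \<le> cle P t x" for x using le_split[of t x] by simp
  have Ceq: "C = B \<union> ({a,b} \<union> A)"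
  proof
    show "C \<subseteq> B \<union> ({a,b} \<union> A)"
    proof
      fix z assume z: "z \<in> C"
      then have zP: "z \<in> P" using assms(1) by blast
      consider "pr t z < pr t a" | "pr t z > pr t a" | "pr t z = pr t a" by linarith
      then show "z \<in> B \<union> ({a,b} \<union> A)"
        using z tie_unique[OF gp aP bP zP assms(5,6)] unfolding A_def B_def by cases auto
    qed
  qed (use assms in \<open>auto simp: A_def B_def\<close>)
  have finB: "finite B" "finite A" using finC unfolding A_def B_def by auto
  have sumC: "(\<Sum>x\<in>C. w P t x) = (\<Sum>x\<in>B. w P t x) + (w P t a + w P t b) + (\<Sum>x\<in>A. w P t x)"
  proof -
    have "(\<Sum>x\<in>C. w P t x) = (\<Sum>x\<in>B. w P t x) + (\<Sum>x\<in>{a,b} \<union> A. w P t x)"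
      by (subst Ceq, rule sum.union_disjoint) (use finB assms(6) in \<open>auto simp: A_def B_def\<close>)
    also have "(\<Sum>x\<in>{a,b} \<union> A. w P t x) = (\<Sum>x\<in>{a,b}. w P t x) + (\<Sum>x\<in>A. w P t x)"
      by (rule sum.union_disjoint) (use finB assms(6) in \<open>auto simp: A_def B_def\<close>)
    finally show ?thesis using assms(5) by simp
  qed
  have gC: "(\<Sum>x\<in>C. w P t x) = int (card C)" using g_const[OF assms(1,2)] .
  have SB: "(\<Sum>x\<in>B. w P t x) \<le> 2 * int (card B)"
    using sum_mono[of B "\<lambda>x. w P t x" "\<lambda>x. 2"] w_le2 by simp
  have SA: "(\<Sum>x\<in>A. w P t x) \<ge> 0" using w_le2 by (simp add: sum_nonneg)
  have wab: "w P t a = (if 2 * (c0 + 2) \<le> card P then 1 else 0) + (if 2 * c0 < card P then 1 else 0)"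
            "w P t b = (if 2 * (c0 + 2) \<le> card P then 1 else 0) + (if 2 * c0 < card P then 1 else 0)"
    unfolding w_def cla clb c0_def by simp_all
  have "2 * c0 + 2 = card P \<or> 2 * c0 + 4 \<le> card P \<or> card P \<le> 2 * c0" using ev by presburger
  then consider "2 * c0 + 2 = card P" | "2 * c0 + 4 \<le> card P" | "card P \<le> 2 * c0" by blast
  then show ?thesis
  proof cases
    case 1
    have "(\<Sum>x\<in>B. w P t x) = (\<Sum>x\<in>B. 2)"
    proof (rule sum.cong[OF refl])
      fix x assume x: "x \<in> B"
      have h1: "2 * cle P t x \<le> card P" using Bb[OF x] 1 by linarith
      have h2: "2 * clt P t x < card P" using Bb[OF x] cltle[of x] 1 by linarith
      show "w P t x = 2" by (simp add: w_def h1 h2)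
    qed
    moreover have "(\<Sum>x\<in>A. w P t x) = (\<Sum>x\<in>A. 0)"
    proof (rule sum.cong[OF refl])
      fix x assume x: "x \<in> A"
      have h1: "\<not> 2 * cle P t x \<le> card P" using Ab[OF x] cltle[of x] 1 by linarith
      have h2: "\<not> 2 * clt P t x < card P" using Ab[OF x] 1 by linarith
      show "w P t x = 0" by (simp add: w_def h1 h2)
    qed
    ultimately have "int (card C) = 2 * int (card B) + 2" using sumC gC wab 1 by simp
    then show ?thesis using 1 unfolding B_def c0_def by simp
  next
    case 2
    have "(\<Sum>x\<in>B. w P t x) = (\<Sum>x\<in>B. 2)"
    proof (rule sum.cong[OF refl])
      fix x assume x: "x \<in> B"
      have h1: "2 * cle P t x \<le> card P" using Bb[OF x] 2 by linarith
      have h2: "2 * clt P t x < card P" using Bb[OF x] cltle[of x] 2 by linarith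
      show "w P t x = 2" by (simp add: w_def h1 h2)
    qed
    then have "int (card C) \<ge> 2 * int (card B) + 4" using sumC gC wab 2 SA by simp
    then show ?thesis using 2 unfolding B_def c0_def by simp
  next
    case 3
    have "(\<Sum>x\<in>A. w P t x) = (\<Sum>x\<in>A. 0)"
    proof (rule sum.cong[OF refl])
      fix x assume x: "x \<in> A"
      have h1: "\<not> 2 * cle P t x \<le> card P" using Ab[OF x] cltle[of x] 3 by linarith
      have h2: "\<not> 2 * clt P t x < card P" using Ab[OF x] 3 by linarith
      show "w P t x = 0" by (simp add: w_def h1 h2)
    qed
    then have "int (card C) \<le> 2 * int (card B)" using sumC gC wab 3 SB by simp
    then show ?thesis using 3 unfolding B_def c0_def by simp
  qed
qed

end

lemma angle_exists:
  assumes "a \<noteq> b"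
  shows "\<exists>t. pr t a = pr t b"
proof -
  define d1 where "d1 = fst b - fst a"
  define d2 where "d2 = snd b - snd a"
  define r where "r = sqrt (d1^2 + d2^2)"
  have "d1 \<noteq> 0 \<or> d2 \<noteq> 0" using assms unfolding d1_def d2_def by (auto simp: prod_eq_iff)
  then have pos: "d1^2 + d2^2 > 0" by (auto simp: sum_power2_gt_zero_iff)
  then have r0: "r > 0" unfolding r_def by simp
  have rr: "r^2 = d1^2 + d2^2" unfolding r_def using pos by simp
  have "(-d2/r)^2 + (d1/r)^2 = (d2^2 + d1^2)/r^2" by (simp add: power_divide add_divide_distrib)
  also have "\<dots> = 1" using r0 by (simp add: rr[symmetric] add.commute)
  finally have "(-d2/r)^2 + (d1/r)^2 = 1" .
  then obtain t where t: "-d2/r = cos t" "d1/r = sin t" using sincos_total_2pi by metis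
  have "pr t b - pr t a = cos t * d1 + sin t * d2" unfolding pr_def d1_def d2_def by algebra
  also have "\<dots> = 0" unfolding t[symmetric] using r0 by (simp add: field_simps)
  finally have "pr t b - pr t a = 0" .
  then show ?thesis by (intro exI[of _ t]) simp
qed

theorem mainTheorem6:
  fixes P :: "(real \<times> real) set" and p :: "real \<times> real"
  assumes "finite P" and "general_position P" and "even (card P)"
    and "p \<in> P"
  defines "VC \<equiv> component_vertices P p"
  shows "even (card VC) \<and>
         (\<forall>a b. underlying_adj VC a b \<longleftrightarrow> (a \<in> VC \<and> b \<in> VC \<and> underlying_adj P a b))"
proof -
  interpret hl P using assms(1,2,3) by unfold_locales
  have VCP: "VC \<subseteq> P"
  proof
    fix x assume "x \<in> VC"
    then have "(halving_line P)\<^sup>*\<^sup>* p x" unfolding VC_def component_vertices_def by simp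
    then show "x \<in> P"
      by (induction rule: rtranclp_induct) (use assms(4) in \<open>auto simp: halving_line_def\<close>)
  qed
  have clo: "y \<in> VC" if "x \<in> VC" "halving_line P x y" for x y
    using that unfolding VC_def component_vertices_def by (auto intro: rtranclp.rtrancl_into_rtrancl)
  have finVC: "finite VC" using VCP assms(1) finite_subset by blast
  have gpVC: "general_position VC" using assms(2) VCP unfolding general_position_def by blast
  have ev1: "even (card VC)"
  proof (cases "\<exists>x\<in>VC. w P 0 x = 1")
    case True
    then obtain x where x: "x \<in> VC" "w P 0 x = 1" by blast
    have xP: "x \<in> P" using x VCP by blast
    have xin: "x \<in> {q\<in>P. pr 0 q = pr 0 x}" using xP by simp
    have "finite {q\<in>P. pr 0 q = pr 0 x}" using assms(1) by simp
    then have "card {q\<in>P. pr 0 q = pr 0 x} > 0" using xin card_gt_0_iff by blast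
    then have lt: "clt P 0 x < cle P 0 x" using le_split[of 0 x] by simp
    have h: "2 * clt P 0 x < card P" "\<not> 2 * cle P 0 x \<le> card P"
      using x(2) lt unfolding w_def by (auto split: if_splits)
    consider "{q\<in>P. pr 0 q = pr 0 x} = {x}" | "\<exists>y\<in>P. y \<noteq> x \<and> {q\<in>P. pr 0 q = pr 0 x} = {x,y}"
      using eqclass[OF xP] by blast
    then show ?thesis
    proof cases
      case 1
      then have "cle P 0 x = clt P 0 x + 1" using le_split[of 0 x] by simp
      then show ?thesis using h assms(3) by presburger
    next
      case 2
      then obtain y where y: "y \<in> P" "y \<noteq> x" "{q\<in>P. pr 0 q = pr 0 x} = {x,y}" by blast
      have "cle P 0 x = clt P 0 x + 2" using le_split[of 0 x] y by simp
      then have c: "2 * clt P 0 x + 2 = card P" using h assms(3) by presburger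
      have ty: "pr 0 y = pr 0 x" using y(3) by blast
      have "halving_line P x y"
        using halving_tie[OF assms(1,2) xP y(1) y(2)[symmetric] ty[symmetric]] c unfolding clt_def by simp
      then have yV: "y \<in> VC" using clo x(1) by blast
      have "2 * card {c\<in>VC. pr 0 c < pr 0 x} + 2 = card VC"
        using tie_main[OF VCP _ x(1) yV y(2)[symmetric] ty[symmetric]] clo c by blast
      then show ?thesis by presburger
    qed
  next
    case False
    have "even (\<Sum>x\<in>VC. w P 0 x)"
    proof (rule dvd_sum)
      fix x assume "x \<in> VC"
      then have "w P 0 x \<noteq> 1" using False by blast
      then show "2 dvd w P 0 x" unfolding w_def by (auto split: if_splits)
    qed
    moreover have "(\<Sum>x\<in>VC. w P 0 x) = int (card VC)" by (rule g_const[OF VCP]) (rule clo)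
    ultimately have "even (int (card VC))" by simp
    then show ?thesis by simp
  qed
  have iff: "halving_line VC a b \<longleftrightarrow> (a \<in> VC \<and> b \<in> VC \<and> halving_line P a b)" for a b
  proof (cases "a \<in> VC \<and> b \<in> VC \<and> a \<noteq> b")
    case True
    then have aV: "a \<in> VC" and bV: "b \<in> VC" and ab: "a \<noteq> b" by auto
    have aP: "a \<in> P" and bP: "b \<in> P" using aV bV VCP by auto
    obtain t where t: "pr t a = pr t b" using angle_exists[OF ab] by blast
    have 1: "halving_line VC a b \<longleftrightarrow> 2 * card {c\<in>VC. pr t c < pr t a} + 2 = card VC"
      by (rule halving_tie[OF finVC gpVC aV bV ab t])
    have 2: "halving_line P a b \<longleftrightarrow> 2 * clt P t a + 2 = card P"
      using halving_tie[OF assms(1,2) aP bP ab t] unfolding clt_def .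
    have 3: "2 * clt P t a + 2 = card P \<longleftrightarrow> 2 * card {c\<in>VC. pr t c < pr t a} + 2 = card VC"
      by (rule tie_main[OF VCP _ aV bV ab t]) (rule clo)
    show ?thesis using 1 2 3 aV bV by blast
  next
    case False
    then show ?thesis unfolding halving_line_def by auto
  qed
  show ?thesis using ev1 iff by blast
qed

end
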